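(* Let $(I,d,(I_n)_n)$ be a uniform metric index set, $W$ a compact Hausdorff space and $m:X^{\mathbb{R}}\to C^*(W)$ a sequence measure function with associated operator measure function $\overline{m}$. Then for any two non-expansive operators $T_1,T_2\in B(\ell^2(I))$, $\overline{m}(T_1T_2)=\overline{m}(T_2T_1)$.
   Context: $I$ is countable with nested finite subsets $I_1\subset I_2\subset\cdots$, $\bigcup_nI_n=I$, and a quasi-distance $d$ (i.e. $d\ge0$, $d(i,i)=0$, symmetric, triangle inequality); $B_R(i)=\{j:d(j,i)\le R\}$. $(I,d,(I_n))$ is a uniform metric index set if $\sup_i|B_R(i)|<\infty$ for all $R>0$ and $\lim_{n\to\infty}|(\bigcup_{j\in I\setminus I_n}B_R(j))\cap I_n|/|I_n|=0$ for all $R>0$. $\{\delta_i\}$ is the canonical basis of $\ell^2(I)$; $A\in B(\ell^2(I))$ is row non-expansive if for every $\varepsilon>0$ there is $N$ with $\sum_{j\notin B_N(i)}|\langle A\delta_i,\delta_j\rangle|^2<\varepsilon$ for all $i$, and non-expansive if $A$ and $A^*$ are row non-expansive. Frame compatible sequences: nonnegative $\mathbf{x}$ with $0\le x_1\le|I_1|$, $0\le x_i-x_{i-1}\le|I_i\setminus I_{i-1}|$; $X$ their set, $X^+=\{c\mathbf{x}\}_{c\ge0}$, $X^{\mathbb{R}}=X^+-X^+$. $\mathbf{x}\approx\mathbf{y}$ iff $\lim(x_n-y_n)/|I_n|=0$; $\mathbf{y}\leqq\mathbf{x}$ iff $\liminf(x_n-y_n)/|I_n|\ge0$. $C^*(W)$: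 real continuous functions on $W$. A sequence measure function is a linear $m:X^{\mathbb{R}}\to C^*(W)$ with $m(\mathbf{x})=m(\mathbf{y})\iff\mathbf{x}\approx\mathbf{y}$ on $X^{\mathbb{R}}$, $m(\mathbf{x})\le m(\mathbf{y})\iff\mathbf{x}\leqq\mathbf{y}$ on $X^+$, and $m((|I_1|,|I_2|,\dots))=1$. For $T\in B(\ell^2(I))$ let $b(T)=(\sum_{i\in I_n}\langle T\delta_i,\delta_i\rangle)_n$; its real and imaginary parts lie in $X^{\mathbb{R}}$. The operator measure function is $\overline{m}(T)=m(\operatorname{Re}b(T))+i\,m(\operatorname{Im}b(T))$ (a complex-valued continuous function on $W$). *)

theory Defs
  imports "HOL-Analysis.Analysis"
begin

text \<open>The countable index set I is the universe of a countable type 'i.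
  The nested finite subsets I_1 \<subseteq> I_2 \<subseteq> ... are given by Is :: nat \<Rightarrow> 'i set,
  where Is 0 plays the role of I_1, Is 1 of I_2, etc.\<close>

definition ball_q :: "('i \<Rightarrow> 'i \<Rightarrow> real) \<Rightarrow> real \<Rightarrow> 'i \<Rightarrow> 'i set" where
  "ball_q d R i = {j. d j i \<le> R}"

definition quasi_distance :: "('i \<Rightarrow> 'i \<Rightarrow> real) \<Rightarrow> bool" where
  "quasi_distance d \<longleftrightarrow>
     (\<forall>i j. d i j \<ge> 0) \<and> (\<forall>i. d i i = 0) \<and> (\<forall>i j. d i j = d j i) \<and>
     (\<forall>i j k. d i k \<le> d i j + d j k)"

definition nested_exhaustion :: "(nat \<Rightarrow> 'i set) \<Rightarrow> bool" where
  "nested_exhaustion Is \<longleftrightarrow>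
     (\<forall>n. finite (Is n)) \<and> (\<forall>n. Is n \<subseteq> Is (Suc n)) \<and> (\<Union>n. Is n) = UNIV"

definition uniform_metric_index_set ::
  "('i::countable \<Rightarrow> 'i \<Rightarrow> real) \<Rightarrow> (nat \<Rightarrow> 'i set) \<Rightarrow> bool" where
  "uniform_metric_index_set d Is \<longleftrightarrow>
     quasi_distance d \<and> nested_exhaustion Is \<and>
     (\<forall>R>0. \<exists>M::nat. \<forall>i. finite (ball_q d R i) \<and> card (ball_q d R i) \<le> M) \<and>
     (\<forall>R>0. (\<lambda>n. real (card ((\<Union>j\<in>UNIV - Is n. ball_q d R j) \<inter> Is n)) / real (card (Is n)))
              \<longlonglongrightarrow> 0)"

definition frame_compatible :: "(nat \<Rightarrow> 'i set) \<Rightarrow> (nat \<Rightarrow> real) \<Rightarrow> bool" where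
  "frame_compatible Is x \<longleftrightarrow>
     0 \<le> x 0 \<and> x 0 \<le> real (card (Is 0)) \<and>
     (\<forall>n. 0 \<le> x (Suc n) - x n \<and> x (Suc n) - x n \<le> real (card (Is (Suc n) - Is n)))"

definition Xset :: "(nat \<Rightarrow> 'i set) \<Rightarrow> (nat \<Rightarrow> real) set" where
  "Xset Is = {x. frame_compatible Is x}"

definition Xplus :: "(nat \<Rightarrow> 'i set) \<Rightarrow> (nat \<Rightarrow> real) set" where
  "Xplus Is = {(\<lambda>n. c * x n) | c x. c \<ge> 0 \<and> x \<in> Xset Is}"

definition XR :: "(nat \<Rightarrow> 'i set) \<Rightarrow> (nat \<Rightarrow> real) set" where
  "XR Is = {(\<lambda>n. x n - y n) | x y. x \<in> Xplus Is \<and> y \<in> Xplus Is}"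

definition seq_approx :: "(nat \<Rightarrow> 'i set) \<Rightarrow> (nat \<Rightarrow> real) \<Rightarrow> (nat \<Rightarrow> real) \<Rightarrow> bool" where
  "seq_approx Is x y \<longleftrightarrow> (\<lambda>n. (x n - y n) / real (card (Is n))) \<longlonglongrightarrow> 0"

text \<open>seq_leqq Is y x  means  y \<leqq> x, i.e. liminf (x_n - y_n)/|I_n| \<ge> 0.\<close>
definition seq_leqq :: "(nat \<Rightarrow> 'i set) \<Rightarrow> (nat \<Rightarrow> real) \<Rightarrow> (nat \<Rightarrow> real) \<Rightarrow> bool" where
  "seq_leqq Is y x \<longleftrightarrow>
     liminf (\<lambda>n. ereal ((x n - y n) / real (card (Is n)))) \<ge> 0"

text \<open>W is the universe of a type 'w carrying a Hausdorff topology with compact universe;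
  C*(W) is the set of real-valued continuous functions on W.\<close>

definition sequence_measure_function ::
  "(nat \<Rightarrow> 'i set) \<Rightarrow> ((nat \<Rightarrow> real) \<Rightarrow> ('w::topological_space \<Rightarrow> real)) \<Rightarrow> bool" where
  "sequence_measure_function Is m \<longleftrightarrow>
     (\<forall>x\<in>XR Is. continuous_on UNIV (m x)) \<and>
     (\<forall>x\<in>XR Is. \<forall>y\<in>XR Is. \<forall>a b::real.
        m (\<lambda>n. a * x n + b * y n) = (\<lambda>w. a * m x w + b * m y w)) \<and>
     (\<forall>x\<in>XR Is. \<forall>y\<in>XR Is. m x = m y \<longleftrightarrow> seq_approx Is x y) \<and>
     (\<forall>x\<in>Xplus Is. \<forall>y\<in>Xplus Is. (\<forall>w. m x w \<le> m y w) \<longleftrightarrow> seq_leqq Is x y) \<and>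
     m (\<lambda>n. real (card (Is n))) = (\<lambda>w. 1)"

definition ell2 :: "('i \<Rightarrow> complex) set" where
  "ell2 = {f. (\<lambda>i. (cmod (f i))\<^sup>2) summable_on UNIV}"

definition l2norm :: "('i \<Rightarrow> complex) \<Rightarrow> real" where
  "l2norm f = sqrt (infsum (\<lambda>i. (cmod (f i))\<^sup>2) UNIV)"

definition l2inner :: "('i \<Rightarrow> complex) \<Rightarrow> ('i \<Rightarrow> complex) \<Rightarrow> complex" where
  "l2inner f g = infsum (\<lambda>i. f i * cnj (g i)) UNIV"

definition delta :: "'i \<Rightarrow> 'i \<Rightarrow> complex" where
  "delta i = (\<lambda>j. if j = i then 1 else 0)"

text \<open>A bounded operator on l^2(I) is represented by a function on 'i \<Rightarrow> complex,
  of which only the restriction to ell2 is relevant.\<close>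
definition bounded_op :: "(('i \<Rightarrow> complex) \<Rightarrow> ('i \<Rightarrow> complex)) \<Rightarrow> bool" where
  "bounded_op T \<longleftrightarrow>
     (\<forall>f\<in>ell2. T f \<in> ell2) \<and>
     (\<forall>f\<in>ell2. \<forall>g\<in>ell2. T (\<lambda>i. f i + g i) = (\<lambda>i. T f i + T g i)) \<and>
     (\<forall>f\<in>ell2. \<forall>c. T (\<lambda>i. c * f i) = (\<lambda>i. c * T f i)) \<and>
     (\<exists>K. \<forall>f\<in>ell2. l2norm (T f) \<le> K * l2norm f)"

definition is_adjoint :: "(('i \<Rightarrow> complex) \<Rightarrow> ('i \<Rightarrow> complex)) \<Rightarrow> (('i \<Rightarrow> complex) \<Rightarrow> ('i \<Rightarrow> complex)) \<Rightarrow> bool" where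
  "is_adjoint T S \<longleftrightarrow> bounded_op S \<and>
     (\<forall>f\<in>ell2. \<forall>g\<in>ell2. l2inner (T f) g = l2inner f (S g))"

definition row_nonexpansive ::
  "('i \<Rightarrow> 'i \<Rightarrow> real) \<Rightarrow> (('i \<Rightarrow> complex) \<Rightarrow> ('i \<Rightarrow> complex)) \<Rightarrow> bool" where
  "row_nonexpansive d A \<longleftrightarrow>
     (\<forall>\<epsilon>>0. \<exists>N::real. \<forall>i.
        infsum (\<lambda>j. (cmod (l2inner (A (delta i)) (delta j)))\<^sup>2) (UNIV - ball_q d N i) < \<epsilon>)"

definition nonexpansive ::
  "('i \<Rightarrow> 'i \<Rightarrow> real) \<Rightarrow> (('i \<Rightarrow> complex) \<Rightarrow> ('i \<Rightarrow> complex)) \<Rightarrow> bool" where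
  "nonexpansive d A \<longleftrightarrow> bounded_op A \<and> row_nonexpansive d A \<and>
     (\<exists>S. is_adjoint A S \<and> row_nonexpansive d S)"

definition diag_seq :: "(nat \<Rightarrow> 'i set) \<Rightarrow> (('i \<Rightarrow> complex) \<Rightarrow> ('i \<Rightarrow> complex)) \<Rightarrow> nat \<Rightarrow> complex" where
  "diag_seq Is T = (\<lambda>n. \<Sum>i\<in>Is n. l2inner (T (delta i)) (delta i))"

definition op_measure ::
  "(nat \<Rightarrow> 'i set) \<Rightarrow> ((nat \<Rightarrow> real) \<Rightarrow> ('w \<Rightarrow> real)) \<Rightarrow>
   (('i \<Rightarrow> complex) \<Rightarrow> ('i \<Rightarrow> complex)) \<Rightarrow> 'w \<Rightarrow> complex" where
  "op_measure Is m T = (\<lambda>w. complex_of_real (m (\<lambda>n. Re (diag_seq Is T n)) w)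
                           + \<i> * complex_of_real (m (\<lambda>n. Im (diag_seq Is T n)) w))"

end

theory Submission
  imports Defs
begin

lemma amgm: "0 < (t::real) \<Longrightarrow> a*b \<le> (t*a^2 + b^2/t)/2"
proof -
  assume t: "0 < t"
  have e: "(t*a - b)^2 = t*(t*a^2) + b^2 - 2*(t*(a*b))" by algebra
  have "0 \<le> (t*a - b)^2" by simp
  hence "2*(t*(a*b)) \<le> t*(t*a^2) + b^2" unfolding e by linarith
  moreover have "a*b*(2*t) = 2*(t*(a*b))" by algebra
  ultimately have H: "a*b*(2*t) \<le> t*(t*a^2) + b^2" by linarith
  have c: "0 < 2*t" using t by simp
  have "a*b \<le> (t*(t*a^2) + b^2) / (2*t)" using pos_le_divide_eq[OF c] H by blast
  also have "(t*(t*a^2) + b^2) / (2*t) = (t*a^2 + b^2/t)/2" using t by (simp add: field_simps)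
  finally show ?thesis .
qed

lemma prod_bound:
  fixes f g :: "'i \<Rightarrow> complex"
  assumes f: "(\<lambda>j. (cmod (f j))\<^sup>2) summable_on UNIV"
    and g: "(\<lambda>j. (cmod (g j))\<^sup>2) summable_on UNIV" and t: "t > 0"
  shows "(\<lambda>j. f j * cnj (g j)) summable_on J"
    and "cmod (infsum (\<lambda>j. f j * cnj (g j)) J) \<le>
         (t * infsum (\<lambda>j. (cmod (f j))\<^sup>2) J + infsum (\<lambda>j. (cmod (g j))\<^sup>2) J / t) / 2"
proof -
  define h where "h j = (t * (cmod (f j))\<^sup>2 + (cmod (g j))\<^sup>2 / t) / 2" for j
  have fJ: "(\<lambda>j. (cmod (f j))\<^sup>2) summable_on J" by (rule summable_on_subset[OF f]) auto
  have gJ: "(\<lambda>j. (cmod (g j))\<^sup>2) summable_on J" by (rule summable_on_subset[OF g]) auto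
  have f1: "(\<lambda>j. t * (cmod (f j))\<^sup>2) summable_on J" using fJ by (rule summable_on_cmult_right)
  have g1: "(\<lambda>j. (cmod (g j))\<^sup>2 / t) summable_on J"
    unfolding divide_inverse by (rule summable_on_cmult_left[OF gJ])
  have hs0: "(\<lambda>j. (t * (cmod (f j))\<^sup>2 + (cmod (g j))\<^sup>2 / t) * (1/2)) summable_on J"
    by (rule summable_on_cmult_left[OF summable_on_add[OF f1 g1]])
  have heq: "h = (\<lambda>j. (t * (cmod (f j))\<^sup>2 + (cmod (g j))\<^sup>2 / t) * (1/2))"
    by (auto simp: h_def fun_eq_iff)
  have hs: "h summable_on J" unfolding heq by (rule hs0)
  have pt: "norm (f j * cnj (g j)) \<le> h j" for j
  proof -
    have "cmod (f j) * cmod (g j) \<le> (t * (cmod (f j))\<^sup>2 + (cmod (g j))\<^sup>2 / t) / 2"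
      by (rule amgm[OF t])
    thus ?thesis unfolding h_def by (simp add: norm_mult)
  qed
  have abs: "(\<lambda>j. norm (f j * cnj (g j))) summable_on J"
    by (rule summable_on_comparison_test[OF hs]) (use pt in auto)
  show "(\<lambda>j. f j * cnj (g j)) summable_on J" using abs by (rule abs_summable_summable)
  have "cmod (infsum (\<lambda>j. f j * cnj (g j)) J) \<le> infsum h J"
    by (rule norm_infsum_le[OF has_sum_infsum has_sum_infsum])
      (use abs abs_summable_summable hs pt in auto)
  also have "infsum h J = (t * infsum (\<lambda>j. (cmod (f j))\<^sup>2) J + infsum (\<lambda>j. (cmod (g j))\<^sup>2) J / t) / 2"
  proof -
    have "infsum h J = infsum (\<lambda>j. t * (cmod (f j))\<^sup>2 + (cmod (g j))\<^sup>2 / t) J * (1/2)"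
      unfolding heq by (rule infsum_cmult_left')
    also have "infsum (\<lambda>j. t * (cmod (f j))\<^sup>2 + (cmod (g j))\<^sup>2 / t) J
       = infsum (\<lambda>j. t * (cmod (f j))\<^sup>2) J + infsum (\<lambda>j. (cmod (g j))\<^sup>2 / t) J"
      by (rule infsum_add[OF f1 g1])
    also have "infsum (\<lambda>j. t * (cmod (f j))\<^sup>2) J = t * infsum (\<lambda>j. (cmod (f j))\<^sup>2) J"
      by (rule infsum_cmult_right')
    also have "infsum (\<lambda>j. (cmod (g j))\<^sup>2 / t) J = infsum (\<lambda>j. (cmod (g j))\<^sup>2) J / t"
      unfolding divide_inverse by (rule infsum_cmult_left')
    finally show ?thesis by simp
  qed
  finally show "cmod (infsum (\<lambda>j. f j * cnj (g j)) J) \<le>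
         (t * infsum (\<lambda>j. (cmod (f j))\<^sup>2) J + infsum (\<lambda>j. (cmod (g j))\<^sup>2) J / t) / 2" .
qed

lemma sq_sub_le:
  fixes f :: "'i \<Rightarrow> complex"
  assumes f: "(\<lambda>j. (cmod (f j))\<^sup>2) summable_on A" and "J \<subseteq> A"
  shows "infsum (\<lambda>j. (cmod (f j))\<^sup>2) J \<le> infsum (\<lambda>j. (cmod (f j))\<^sup>2) A"
  by (rule infsum_mono_neutral[OF summable_on_subset[OF f assms(2)] f]) (use assms(2) in auto)

lemma full_bound:
  fixes f g :: "'i \<Rightarrow> complex"
  assumes f: "(\<lambda>j. (cmod (f j))\<^sup>2) summable_on UNIV"
    and g: "(\<lambda>j. (cmod (g j))\<^sup>2) summable_on UNIV"
    and fC: "infsum (\<lambda>j. (cmod (f j))\<^sup>2) UNIV \<le> C"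
    and gC: "infsum (\<lambda>j. (cmod (g j))\<^sup>2) UNIV \<le> C"
  shows "cmod (infsum (\<lambda>j. f j * cnj (g j)) J) \<le> C"
proof -
  have "cmod (infsum (\<lambda>j. f j * cnj (g j)) J) \<le>
         (1 * infsum (\<lambda>j. (cmod (f j))\<^sup>2) J + infsum (\<lambda>j. (cmod (g j))\<^sup>2) J / 1) / 2"
    by (rule prod_bound(2)[OF f g]) simp
  moreover have "infsum (\<lambda>j. (cmod (f j))\<^sup>2) J \<le> C" using sq_sub_le[OF f, of J] fC by simp
  moreover have "infsum (\<lambda>j. (cmod (g j))\<^sup>2) J \<le> C" using sq_sub_le[OF g, of J] gC by simp
  ultimately show ?thesis by simp
qed

lemma tail_bound:
  fixes f g :: "'i \<Rightarrow> complex"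
  assumes f: "(\<lambda>j. (cmod (f j))\<^sup>2) summable_on UNIV"
    and g: "(\<lambda>j. (cmod (g j))\<^sup>2) summable_on UNIV"
    and gC: "infsum (\<lambda>j. (cmod (g j))\<^sup>2) UNIV \<le> C"
    and J: "J \<subseteq> UNIV - B"
    and fB: "infsum (\<lambda>j. (cmod (f j))\<^sup>2) (UNIV - B) < \<delta>\<^sup>2 / C"
    and dp: "\<delta> > 0" and Cp: "C > 0"
  shows "cmod (infsum (\<lambda>j. f j * cnj (g j)) J) \<le> \<delta>"
proof -
  have t: "C / \<delta> > 0" using dp Cp by simp
  have "cmod (infsum (\<lambda>j. f j * cnj (g j)) J) \<le>
         ((C/\<delta>) * infsum (\<lambda>j. (cmod (f j))\<^sup>2) J + infsum (\<lambda>j. (cmod (g j))\<^sup>2) J / (C/\<delta>)) / 2"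
    by (rule prod_bound(2)[OF f g t])
  moreover have "infsum (\<lambda>j. (cmod (f j))\<^sup>2) J \<le> \<delta>\<^sup>2 / C"
    using sq_sub_le[OF summable_on_subset[OF f, of "UNIV - B"] J] fB by simp
  moreover have "infsum (\<lambda>j. (cmod (g j))\<^sup>2) J \<le> C" using sq_sub_le[OF g, of J] gC by simp
  ultimately have "cmod (infsum (\<lambda>j. f j * cnj (g j)) J) \<le> ((C/\<delta>) * (\<delta>\<^sup>2 / C) + C / (C/\<delta>)) / 2"
    using t by (smt (verit, best) divide_right_mono mult_left_mono)
  also have "\<dots> = \<delta>" using dp Cp by (simp add: field_simps power2_eq_square)
  finally show ?thesis .
qed

lemma l2inner_delta_right: "l2inner h (delta i) = h i"
proof -
  have "l2inner h (delta i) = infsum (\<lambda>j. h j * cnj (delta i j)) {i}"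
    unfolding l2inner_def by (rule infsum_cong_neutral) (auto simp: delta_def)
  thus ?thesis by (simp add: delta_def)
qed

lemma l2inner_delta_left: "l2inner (delta i) h = cnj (h i)"
proof -
  have "l2inner (delta i) h = infsum (\<lambda>j. delta i j * cnj (h j)) {i}"
    unfolding l2inner_def by (rule infsum_cong_neutral) (auto simp: delta_def)
  thus ?thesis by (simp add: delta_def)
qed

lemma delta_ell2: "delta i \<in> ell2" and l2norm_delta: "l2norm (delta i) = 1"
proof -
  have "((\<lambda>j. (cmod (delta i j))\<^sup>2) has_sum 1) UNIV"
  proof -
    have "((\<lambda>j. (cmod (delta i j))\<^sup>2) has_sum 1) {i}" by (rule has_sum_finiteI) (auto simp: delta_def)
    moreover have "((\<lambda>j. (cmod (delta i j))\<^sup>2) has_sum 1) {i} \<longleftrightarrow> ((\<lambda>j. (cmod (delta i j))\<^sup>2) has_sum 1) UNIV"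
      by (rule has_sum_cong_neutral) (auto simp: delta_def)
    ultimately show ?thesis by simp
  qed
  thus "delta i \<in> ell2" "l2norm (delta i) = 1"
    unfolding ell2_def l2norm_def by (auto simp: summable_on_def infsumI)
qed

lemma op_norm_bound:
  assumes "bounded_op T"
  shows "\<exists>C>0. \<forall>i. (\<lambda>j. (cmod (T (delta i) j))\<^sup>2) summable_on UNIV \<and>
                infsum (\<lambda>j. (cmod (T (delta i) j))\<^sup>2) UNIV \<le> C"
proof -
  have bo: "(\<forall>f\<in>ell2. T f \<in> ell2)" "(\<exists>K. \<forall>f\<in>ell2. l2norm (T f) \<le> K * l2norm f)"
    using assms[unfolded bounded_op_def] by simp_all
  obtain K where K: "\<forall>f\<in>ell2. l2norm (T f) \<le> K * l2norm f" using bo(2) by (elim exE)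
  have main: "(\<lambda>j. (cmod (T (delta i) j))\<^sup>2) summable_on UNIV \<and>
                infsum (\<lambda>j. (cmod (T (delta i) j))\<^sup>2) UNIV \<le> K\<^sup>2 + 1" for i
  proof
    have "T (delta i) \<in> ell2" using bo(1) delta_ell2 by (rule bspec)
    thus s: "(\<lambda>j. (cmod (T (delta i) j))\<^sup>2) summable_on UNIV"
      unfolding ell2_def by (rule CollectD)
    define X where "X = infsum (\<lambda>j. (cmod (T (delta i) j))\<^sup>2) UNIV"
    have nn: "X \<ge> 0" unfolding X_def by (rule infsum_nonneg) simp
    have "l2norm (T (delta i)) \<le> K * l2norm (delta i)" using K delta_ell2 by (rule bspec)
    hence "l2norm (T (delta i)) \<le> K" by (simp add: l2norm_delta)
    hence sk: "sqrt X \<le> K" unfolding l2norm_def X_def .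
    have "X = (sqrt X)\<^sup>2" using nn by simp
    also have "\<dots> \<le> K\<^sup>2" by (rule power_mono[OF sk]) (use nn in simp)
    finally show "infsum (\<lambda>j. (cmod (T (delta i) j))\<^sup>2) UNIV \<le> K\<^sup>2 + 1" unfolding X_def by linarith
  qed
  have "K\<^sup>2 + 1 > (0::real)" by (metis add_pos_nonneg zero_less_one zero_le_power2 add.commute)
  thus ?thesis using main by blast
qed

lemma bounded_op_ell2:
  assumes "bounded_op T" "f \<in> ell2"
  shows "T f \<in> ell2"
proof -
  have "\<forall>f\<in>ell2. T f \<in> ell2" using assms(1)[unfolded bounded_op_def] by simp
  thus ?thesis using assms(2) by (rule bspec)
qed

lemma adj_eq:
  assumes "is_adjoint T S" "f \<in> ell2" "g \<in> ell2"
  shows "l2inner (T f) g = l2inner f (S g)"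
proof -
  have "\<forall>f\<in>ell2. \<forall>g\<in>ell2. l2inner (T f) g = l2inner f (S g)"
    using assms(1)[unfolded is_adjoint_def] by simp
  thus ?thesis using assms(2,3) by simp
qed

lemma adj_bounded:
  assumes "is_adjoint T S" shows "bounded_op S"
  using assms[unfolded is_adjoint_def] by simp

lemma diag_rep:
  assumes b1: "bounded_op T1" and b2: "bounded_op T2"
    and a1: "is_adjoint T1 S1" and a2: "is_adjoint T2 S2"
  shows "l2inner ((T1 \<circ> T2) (delta i)) (delta i) = infsum (\<lambda>j. T2 (delta i) j * cnj (S1 (delta i) j)) UNIV"
    and "l2inner ((T2 \<circ> T1) (delta i)) (delta i) = infsum (\<lambda>j. T2 (delta j) i * cnj (S1 (delta j) i)) UNIV"
proof -
  have E1: "T1 (delta k) \<in> ell2" for k using b1 delta_ell2 by (rule bounded_op_ell2)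
  have E2: "T2 (delta k) \<in> ell2" for k using b2 delta_ell2 by (rule bounded_op_ell2)
  have A1: "l2inner (T1 f) g = l2inner f (S1 g)" if "f \<in> ell2" "g \<in> ell2" for f g
    using a1 that by (rule adj_eq)
  have A2: "l2inner (T2 f) g = l2inner f (S2 g)" if "f \<in> ell2" "g \<in> ell2" for f g
    using a2 that by (rule adj_eq)
  show "l2inner ((T1 \<circ> T2) (delta i)) (delta i) = infsum (\<lambda>j. T2 (delta i) j * cnj (S1 (delta i) j)) UNIV"
    using A1[OF E2 delta_ell2] by (simp add: l2inner_def)
  have p1: "T1 (delta i) j = cnj (S1 (delta j) i)" for j
    using A1[OF delta_ell2 delta_ell2, of i j] by (simp add: l2inner_delta_right l2inner_delta_left)
  have p2: "T2 (delta j) i = cnj (S2 (delta i) j)" for j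
    using A2[OF delta_ell2 delta_ell2, of j i] by (simp add: l2inner_delta_right l2inner_delta_left)
  have "l2inner ((T2 \<circ> T1) (delta i)) (delta i) = l2inner (T1 (delta i)) (S2 (delta i))"
    using A2[OF E1 delta_ell2] by simp
  also have "\<dots> = infsum (\<lambda>j. T2 (delta j) i * cnj (S1 (delta j) i)) UNIV"
    unfolding l2inner_def by (rule infsum_cong) (simp add: p1 p2)
  finally show "l2inner ((T2 \<circ> T1) (delta i)) (delta i) = infsum (\<lambda>j. T2 (delta j) i * cnj (S1 (delta j) i)) UNIV" .
qed

lemma infsum_split_fin:
  fixes g :: "'i \<Rightarrow> complex"
  assumes "g summable_on UNIV" "finite F"
  shows "infsum g UNIV = sum g F + infsum g (- F)"
proof -
  have "infsum g (F \<union> - F) = infsum g F + infsum g (- F)"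
    by (rule infsum_Un_disjoint) (use assms summable_on_subset in auto)
  thus ?thesis using assms by simp
qed

lemma decomp:
  fixes P :: "'i \<Rightarrow> 'i \<Rightarrow> complex"
  assumes F: "finite F" and s1: "\<And>i. P i summable_on UNIV" and s2: "\<And>i. (\<lambda>j. P j i) summable_on UNIV"
  shows "(\<Sum>i\<in>F. infsum (P i) UNIV) - (\<Sum>i\<in>F. infsum (\<lambda>j. P j i) UNIV)
       = (\<Sum>i\<in>F. infsum (P i) (- F) - infsum (\<lambda>j. P j i) (- F))"
proof -
  have "(\<Sum>i\<in>F. infsum (P i) UNIV) = (\<Sum>i\<in>F. sum (P i) F) + (\<Sum>i\<in>F. infsum (P i) (- F))"
    using infsum_split_fin[OF s1 F] by (simp add: sum.distrib)
  moreover have "(\<Sum>i\<in>F. infsum (\<lambda>j. P j i) UNIV) = (\<Sum>i\<in>F. \<Sum>j\<in>F. P j i) + (\<Sum>i\<in>F. infsum (\<lambda>j. P j i) (- F))"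
    using infsum_split_fin[OF s2 F] by (simp add: sum.distrib)
  moreover have "(\<Sum>i\<in>F. \<Sum>j\<in>F. P j i) = (\<Sum>i\<in>F. sum (P i) F)" by (rule sum.swap)
  ultimately show ?thesis by (simp add: sum_subtractf)
qed

lemma frame_sum:
  fixes h :: "'i \<Rightarrow> real"
  assumes N: "nested_exhaustion Is" and h: "\<And>i. 0 \<le> h i" "\<And>i. h i \<le> 1"
  shows "(\<lambda>n. \<Sum>i\<in>Is n. h i) \<in> Xset Is"
proof -
  have fin: "finite (Is n)" for n using N unfolding nested_exhaustion_def by blast
  have sub: "Is n \<subseteq> Is (Suc n)" for n using N unfolding nested_exhaustion_def by blast
  have lo: "0 \<le> sum h A" for A by (rule sum_nonneg) (use h in auto)
  have hi: "sum h A \<le> real (card A)" if "finite A" for A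
    using sum_bounded_above[of A h 1] h by simp
  have d: "sum h (Is (Suc n)) - sum h (Is n) = sum h (Is (Suc n) - Is n)" for n
    using sum.subset_diff[OF sub fin, of h n] by simp
  show ?thesis unfolding Xset_def mem_Collect_eq frame_compatible_def
  proof (intro conjI allI)
    show "0 \<le> sum h (Is 0)" by (rule lo)
    show "sum h (Is 0) \<le> real (card (Is 0))" by (rule hi[OF fin])
    fix n
    show "0 \<le> sum h (Is (Suc n)) - sum h (Is n)" unfolding d by (rule lo)
    show "sum h (Is (Suc n)) - sum h (Is n) \<le> real (card (Is (Suc n) - Is n))"
      unfolding d by (rule hi) (use fin in simp)
  qed
qed

lemma XR_mem:
  fixes g :: "'i \<Rightarrow> real"
  assumes N: "nested_exhaustion Is" and g: "\<And>i. \<bar>g i\<bar> \<le> K"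
  shows "(\<lambda>n. \<Sum>i\<in>Is n. g i) \<in> XR Is"
proof -
  define L where "L = \<bar>K\<bar> + 1"
  have L: "L > 0" unfolding L_def by simp
  have gL: "\<bar>g i\<bar> \<le> L" for i using g[of i] unfolding L_def by simp
  define p where "p = (\<lambda>n. \<Sum>i\<in>Is n. (g i + L) / (2 * L))"
  define q where "q = (\<lambda>n. \<Sum>i\<in>Is n. (1/2::real))"
  have "p \<in> Xset Is" unfolding p_def
  proof (rule frame_sum[OF N])
    fix i
    have "- L \<le> g i" "g i \<le> L" using gL[of i] by auto
    thus "0 \<le> (g i + L) / (2 * L)" "(g i + L) / (2 * L) \<le> 1" using L by (auto simp: divide_simps)
  qed
  hence pX: "(\<lambda>n. (2*L) * p n) \<in> Xplus Is" unfolding Xplus_def using L by force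
  have "q \<in> Xset Is" unfolding q_def by (rule frame_sum[OF N]) auto
  hence qX: "(\<lambda>n. (2*L) * q n) \<in> Xplus Is" unfolding Xplus_def using L by force
  have e1: "(2*L) * p n = (\<Sum>i\<in>Is n. g i) + L * real (card (Is n))" for n
    unfolding p_def sum_distrib_left using L by (simp add: sum.distrib)
  have e2: "(2*L) * q n = L * real (card (Is n))" for n
    unfolding q_def by simp
  have eq: "(\<lambda>n. \<Sum>i\<in>Is n. g i) = (\<lambda>n. (2*L) * p n - (2*L) * q n)"
  proof (rule ext)
    fix n show "(\<Sum>i\<in>Is n. g i) = (2*L) * p n - (2*L) * q n" using e1[of n] e2[of n] by linarith
  qed
  show ?thesis unfolding XR_def eq mem_Collect_eq
    by (rule exI[where x="\<lambda>n. 2*L*p n"], rule exI[where x="\<lambda>n. 2*L*q n"]) (use pX qX in simp)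
qed

lemma swap_id:
  assumes "is_adjoint T1 S1" and "is_adjoint T2 S2"
  shows "T2 (delta j) i * cnj (S1 (delta j) i) = T1 (delta i) j * cnj (S2 (delta i) j)"
proof -
  have A1: "l2inner (T1 f) g = l2inner f (S1 g)" if "f \<in> ell2" "g \<in> ell2" for f g
    using assms(1) that by (rule adj_eq)
  have A2: "l2inner (T2 f) g = l2inner f (S2 g)" if "f \<in> ell2" "g \<in> ell2" for f g
    using assms(2) that by (rule adj_eq)
  have p1: "T1 (delta i) j = cnj (S1 (delta j) i)"
    using A1[OF delta_ell2 delta_ell2, of i j] by (simp add: l2inner_delta_right l2inner_delta_left)
  have p2: "T2 (delta j) i = cnj (S2 (delta i) j)"
    using A2[OF delta_ell2 delta_ell2, of j i] by (simp add: l2inner_delta_right l2inner_delta_left)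
  show ?thesis by (simp add: p1 p2)
qed

lemma lim_abs:
  fixes u :: "nat \<Rightarrow> real" and b :: "real \<Rightarrow> nat \<Rightarrow> nat" and c :: "nat \<Rightarrow> nat"
  assumes H: "\<And>e. e > 0 \<Longrightarrow> \<exists>R>0. \<forall>n. \<bar>u n\<bar> \<le> C * real (b R n) + e * real (c n)"
    and L: "\<And>R. R > 0 \<Longrightarrow> (\<lambda>n. real (b R n) / real (c n)) \<longlonglongrightarrow> 0"
    and C: "C \<ge> 0"
  shows "(\<lambda>n. u n / real (c n)) \<longlonglongrightarrow> 0"
proof (rule LIMSEQ_I)
  fix r :: real assume r: "r > 0"
  obtain R where R: "R > 0" and HR: "\<forall>n. \<bar>u n\<bar> \<le> C * real (b R n) + (r/2) * real (c n)"
    using H[of "r/2"] r by auto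
  have rr: "r / (2 * (C + 1)) > 0" using r C by simp
  obtain no where no: "\<forall>n\<ge>no. norm (real (b R n) / real (c n) - 0) < r / (2 * (C + 1))"
    using LIMSEQ_D[OF L[OF R] rr] by blast
  show "\<exists>no. \<forall>n\<ge>no. norm (u n / real (c n) - 0) < r"
  proof (intro exI allI impI)
    fix n assume n: "n \<ge> no"
    show "norm (u n / real (c n) - 0) < r"
    proof (cases "c n = 0")
      case True thus ?thesis using r by simp
    next
      case False
      hence cp: "real (c n) > 0" by simp
      have q: "real (b R n) / real (c n) < r / (2 * (C + 1))" using no n by simp
      have "\<bar>u n\<bar> / real (c n) \<le> C * (real (b R n) / real (c n)) + r / 2"
        using HR[rule_format, of n] cp by (simp add: field_simps)
      also have "C * (real (b R n) / real (c n)) \<le> C * (r / (2 * (C + 1)))"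
        using q C by (intro mult_left_mono) auto
      also have "C * (r / (2 * (C + 1))) < r / 2"
        using C r by (simp add: field_simps)
      finally show ?thesis by (simp add: abs_divide)
    qed
  qed
qed

theorem lemma7p13:
  fixes d :: "'i::countable \<Rightarrow> 'i \<Rightarrow> real"
    and Is :: "nat \<Rightarrow> 'i set"
    and m :: "(nat \<Rightarrow> real) \<Rightarrow> ('w::t2_space \<Rightarrow> real)"
    and T1 T2 :: "('i \<Rightarrow> complex) \<Rightarrow> ('i \<Rightarrow> complex)"
  assumes "uniform_metric_index_set d Is"
    and "compact (UNIV :: 'w set)"
    and "sequence_measure_function Is m"
    and "nonexpansive d T1"
    and "nonexpansive d T2"
  shows "op_measure Is m (T1 \<circ> T2) = op_measure Is m (T2 \<circ> T1)"
proof -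
  have ne1: "bounded_op T1 \<and> row_nonexpansive d T1 \<and> (\<exists>S. is_adjoint T1 S \<and> row_nonexpansive d S)"
    using assms(4) unfolding nonexpansive_def .
  have ne2: "bounded_op T2 \<and> row_nonexpansive d T2 \<and> (\<exists>S. is_adjoint T2 S \<and> row_nonexpansive d S)"
    using assms(5) unfolding nonexpansive_def .
  obtain S1 where b1: "bounded_op T1" and r1: "row_nonexpansive d T1" and a1: "is_adjoint T1 S1"
    using ne1 by (elim conjE exE)
  obtain S2 where b2: "bounded_op T2" and r2: "row_nonexpansive d T2" and a2: "is_adjoint T2 S2"
    using ne2 by (elim conjE exE)
  have bS1: "bounded_op S1" using a1 by (rule adj_bounded)
  have bS2: "bounded_op S2" using a2 by (rule adj_bounded)
  obtain C1 where C1: "C1 > 0" "\<And>i. (\<lambda>j. (cmod (T1 (delta i) j))\<^sup>2) summable_on UNIV"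
      "\<And>i. infsum (\<lambda>j. (cmod (T1 (delta i) j))\<^sup>2) UNIV \<le> C1"
    using op_norm_bound[OF b1] by blast
  obtain C2 where C2: "C2 > 0" "\<And>i. (\<lambda>j. (cmod (T2 (delta i) j))\<^sup>2) summable_on UNIV"
      "\<And>i. infsum (\<lambda>j. (cmod (T2 (delta i) j))\<^sup>2) UNIV \<le> C2"
    using op_norm_bound[OF b2] by blast
  obtain C3 where C3: "C3 > 0" "\<And>i. (\<lambda>j. (cmod (S1 (delta i) j))\<^sup>2) summable_on UNIV"
      "\<And>i. infsum (\<lambda>j. (cmod (S1 (delta i) j))\<^sup>2) UNIV \<le> C3"
    using op_norm_bound[OF bS1] by blast
  obtain C4 where C4: "C4 > 0" "\<And>i. (\<lambda>j. (cmod (S2 (delta i) j))\<^sup>2) summable_on UNIV"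
      "\<And>i. infsum (\<lambda>j. (cmod (S2 (delta i) j))\<^sup>2) UNIV \<le> C4"
    using op_norm_bound[OF bS2] by blast
  define C where "C = C1 + C2 + C3 + C4"
  have Cp: "C > 0" unfolding C_def using C1 C2 C3 C4 by simp
  have CT1: "infsum (\<lambda>j. (cmod (T1 (delta i) j))\<^sup>2) UNIV \<le> C" for i
    using C1(3)[of i] C1(1) C2(1) C3(1) C4(1) unfolding C_def by linarith
  have CT2: "infsum (\<lambda>j. (cmod (T2 (delta i) j))\<^sup>2) UNIV \<le> C" for i
    using C2(3)[of i] C1(1) C2(1) C3(1) C4(1) unfolding C_def by linarith
  have CS1: "infsum (\<lambda>j. (cmod (S1 (delta i) j))\<^sup>2) UNIV \<le> C" for i
    using C3(3)[of i] C1(1) C2(1) C3(1) C4(1) unfolding C_def by linarith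
  have CS2: "infsum (\<lambda>j. (cmod (S2 (delta i) j))\<^sup>2) UNIV \<le> C" for i
    using C4(3)[of i] C1(1) C2(1) C3(1) C4(1) unfolding C_def by linarith
  have N: "nested_exhaustion Is" and qd: "quasi_distance d"
    and U: "\<And>R. R > 0 \<Longrightarrow> (\<lambda>n. real (card ((\<Union>j\<in>UNIV - Is n. ball_q d R j) \<inter> Is n)) / real (card (Is n)))
              \<longlonglongrightarrow> 0"
    using assms(1) unfolding uniform_metric_index_set_def by blast+
  have fin: "finite (Is n)" for n using N unfolding nested_exhaustion_def by blast
  have sym: "d i j = d j i" for i j using qd unfolding quasi_distance_def by blast
  define P where "P i j = T2 (delta i) j * cnj (S1 (delta i) j)" for i j
  have PQ: "P j i = T1 (delta i) j * cnj (S2 (delta i) j)" for i j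
    unfolding P_def by (rule swap_id[OF a1 a2])
  have Ps: "P i summable_on UNIV" for i
    unfolding P_def by (rule prod_bound(1)[OF C2(2) C3(2), of 1]) simp
  have Qs: "(\<lambda>j. P j i) summable_on UNIV" for i
    unfolding PQ by (rule prod_bound(1)[OF C1(2) C4(2), of 1]) simp
  have bndP: "cmod (infsum (P i) J) \<le> C" for i J
    unfolding P_def by (rule full_bound[OF C2(2) C3(2) CT2 CS1])
  have bndQ: "cmod (infsum (\<lambda>j. P j i) J) \<le> C" for i J
    unfolding PQ by (rule full_bound[OF C1(2) C4(2) CT1 CS2])
  have dA: "diag_seq Is (T1 \<circ> T2) n = (\<Sum>i\<in>Is n. infsum (P i) UNIV)" for n
    unfolding diag_seq_def P_def using diag_rep(1)[OF b1 b2 a1 a2] by simp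
  have dB: "diag_seq Is (T2 \<circ> T1) n = (\<Sum>i\<in>Is n. infsum (\<lambda>j. P j i) UNIV)" for n
    unfolding diag_seq_def P_def using diag_rep(2)[OF b1 b2 a1 a2] by simp
  define bd where "bd R n = (\<Union>j\<in>UNIV - Is n. ball_q d R j) \<inter> Is n" for R n
  have key: "\<exists>R>0. \<forall>n. cmod (diag_seq Is (T1 \<circ> T2) n - diag_seq Is (T2 \<circ> T1) n)
                 \<le> (2*C) * real (card (bd R n)) + e * real (card (Is n))" if e: "e > 0" for e
  proof -
    define \<delta> where "\<delta> = e / 2"
    have dp: "\<delta> > 0" using e unfolding \<delta>_def by simp
    have eta: "\<delta>\<^sup>2 / C > 0" using dp Cp by simp
    obtain N1 where N1: "\<And>i. infsum (\<lambda>j. (cmod (T1 (delta i) j))\<^sup>2) (UNIV - ball_q d N1 i) < \<delta>\<^sup>2 / C"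
      using r1 eta unfolding row_nonexpansive_def l2inner_delta_right by blast
    obtain N2 where N2: "\<And>i. infsum (\<lambda>j. (cmod (T2 (delta i) j))\<^sup>2) (UNIV - ball_q d N2 i) < \<delta>\<^sup>2 / C"
      using r2 eta unfolding row_nonexpansive_def l2inner_delta_right by blast
    define R where "R = max (max N1 N2) 1"
    have Rp: "R > 0" unfolding R_def by simp
    have "cmod (diag_seq Is (T1 \<circ> T2) n - diag_seq Is (T2 \<circ> T1) n)
                 \<le> (2*C) * real (card (bd R n)) + e * real (card (Is n))" for n
    proof -
      let ?F = "Is n"
      have per: "cmod (infsum (P i) (- ?F) - infsum (\<lambda>j. P j i) (- ?F)) \<le> (if i \<in> bd R n then 2*C else 0) + e"
        if iF: "i \<in> ?F" for i
      proof (cases "i \<in> bd R n")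
        case True
        have "cmod (infsum (P i) (- ?F) - infsum (\<lambda>j. P j i) (- ?F))
              \<le> cmod (infsum (P i) (- ?F)) + cmod (infsum (\<lambda>j. P j i) (- ?F))"
          by (rule norm_triangle_ineq4)
        also have "\<dots> \<le> C + C" using bndP bndQ by (intro add_mono)
        finally show ?thesis using True e by simp
      next
        case False
        have sub: "- ?F \<subseteq> UNIV - ball_q d N' i" if "N' \<le> R" for N'
        proof
          fix j assume j: "j \<in> - ?F"
          show "j \<in> UNIV - ball_q d N' i"
          proof (rule ccontr)
            assume "j \<notin> UNIV - ball_q d N' i"
            hence "d j i \<le> N'" unfolding ball_q_def by simp
            hence "i \<in> ball_q d R j" using that sym[of i j] unfolding ball_q_def by simp
            hence "i \<in> bd R n" using j iF unfolding bd_def by blast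
            thus False using False by simp
          qed
        qed
        have s1: "- ?F \<subseteq> UNIV - ball_q d N1 i" by (rule sub) (simp add: R_def)
        have s2: "- ?F \<subseteq> UNIV - ball_q d N2 i" by (rule sub) (simp add: R_def)
        have tP: "cmod (infsum (P i) (- ?F)) \<le> \<delta>"
          unfolding P_def by (rule tail_bound[OF C2(2) C3(2) CS1 s2 N2 dp Cp])
        have tQ: "cmod (infsum (\<lambda>j. P j i) (- ?F)) \<le> \<delta>"
          unfolding PQ by (rule tail_bound[OF C1(2) C4(2) CS2 s1 N1 dp Cp])
        have "cmod (infsum (P i) (- ?F) - infsum (\<lambda>j. P j i) (- ?F))
              \<le> cmod (infsum (P i) (- ?F)) + cmod (infsum (\<lambda>j. P j i) (- ?F))"
          by (rule norm_triangle_ineq4)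
        also have "\<dots> \<le> \<delta> + \<delta>" using tP tQ by (intro add_mono)
        finally show ?thesis using False unfolding \<delta>_def by simp
      qed
      have "cmod (diag_seq Is (T1 \<circ> T2) n - diag_seq Is (T2 \<circ> T1) n)
            = cmod (\<Sum>i\<in>?F. infsum (P i) (- ?F) - infsum (\<lambda>j. P j i) (- ?F))"
        unfolding dA dB using decomp[OF fin Ps Qs] by simp
      also have "\<dots> \<le> (\<Sum>i\<in>?F. cmod (infsum (P i) (- ?F) - infsum (\<lambda>j. P j i) (- ?F)))"
        by (rule norm_sum)
      also have "\<dots> \<le> (\<Sum>i\<in>?F. (if i \<in> bd R n then 2*C else 0) + e)"
        by (rule sum_mono) (rule per)
      also have "\<dots> = (2*C) * real (card (?F \<inter> bd R n)) + e * real (card ?F)"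
        by (simp add: sum.distrib sum.If_cases fin)
      also have "?F \<inter> bd R n = bd R n" unfolding bd_def by blast
      finally show ?thesis .
    qed
    thus ?thesis using Rp by blast
  qed
  have smf0: "\<forall>x\<in>XR Is. \<forall>y\<in>XR Is. m x = m y \<longleftrightarrow> seq_approx Is x y"
    using assms(3) unfolding sequence_measure_function_def by (elim conjE) assumption
  have smf: "m x = m y \<longleftrightarrow> seq_approx Is x y" if "x \<in> XR Is" "y \<in> XR Is" for x y
    using smf0 that by blast
  have XRA: "(\<lambda>n. Re (diag_seq Is (T1 \<circ> T2) n)) \<in> XR Is" "(\<lambda>n. Im (diag_seq Is (T1 \<circ> T2) n)) \<in> XR Is"
    unfolding dA Re_sum Im_sum
    by (rule XR_mem[OF N, where K=C], rule order_trans[OF abs_Re_le_cmod bndP])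
       (rule XR_mem[OF N, where K=C], rule order_trans[OF abs_Im_le_cmod bndP])
  have XRB: "(\<lambda>n. Re (diag_seq Is (T2 \<circ> T1) n)) \<in> XR Is" "(\<lambda>n. Im (diag_seq Is (T2 \<circ> T1) n)) \<in> XR Is"
    unfolding dB Re_sum Im_sum
    by (rule XR_mem[OF N, where K=C], rule order_trans[OF abs_Re_le_cmod bndQ])
       (rule XR_mem[OF N, where K=C], rule order_trans[OF abs_Im_le_cmod bndQ])
  have lim: "(\<lambda>n. (f (diag_seq Is (T1 \<circ> T2) n) - f (diag_seq Is (T2 \<circ> T1) n)) / real (card (Is n))) \<longlonglongrightarrow> 0"
    if f: "\<And>z w. \<bar>f z - f w\<bar> \<le> cmod (z - w)" for f :: "complex \<Rightarrow> real"
  proof (rule lim_abs[where C = "2*C" and b = "\<lambda>R n. card (bd R n)"])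
    fix e :: real assume "e > 0"
    then obtain R where R: "R > 0" and HR: "\<forall>n. cmod (diag_seq Is (T1 \<circ> T2) n - diag_seq Is (T2 \<circ> T1) n)
                 \<le> (2*C) * real (card (bd R n)) + e * real (card (Is n))" using key by blast
    show "\<exists>R>0. \<forall>n. \<bar>f (diag_seq Is (T1 \<circ> T2) n) - f (diag_seq Is (T2 \<circ> T1) n)\<bar>
            \<le> 2 * C * real (card (bd R n)) + e * real (card (Is n))"
    proof (intro exI conjI allI)
      show "R > 0" by (rule R)
      fix n show "\<bar>f (diag_seq Is (T1 \<circ> T2) n) - f (diag_seq Is (T2 \<circ> T1) n)\<bar>
            \<le> 2 * C * real (card (bd R n)) + e * real (card (Is n))"
        by (rule order_trans[OF f HR[rule_format]])
    qed
  next
    fix R :: real assume "R > 0"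
    thus "(\<lambda>n. real (card (bd R n)) / real (card (Is n))) \<longlonglongrightarrow> 0" unfolding bd_def by (rule U)
  next
    show "0 \<le> 2 * C" using Cp by simp
  qed
  have fRe: "\<bar>Re z - Re w\<bar> \<le> cmod (z - w)" for z w
    using abs_Re_le_cmod[of "z - w"] by simp
  have fIm: "\<bar>Im z - Im w\<bar> \<le> cmod (z - w)" for z w
    using abs_Im_le_cmod[of "z - w"] by simp
  have eRe: "m (\<lambda>n. Re (diag_seq Is (T1 \<circ> T2) n)) = m (\<lambda>n. Re (diag_seq Is (T2 \<circ> T1) n))"
    using smf[OF XRA(1) XRB(1)] lim[OF fRe] unfolding seq_approx_def by simp
  have eIm: "m (\<lambda>n. Im (diag_seq Is (T1 \<circ> T2) n)) = m (\<lambda>n. Im (diag_seq Is (T2 \<circ> T1) n))"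
    using smf[OF XRA(2) XRB(2)] lim[OF fIm] unfolding seq_approx_def by simp
  show ?thesis unfolding op_measure_def eRe eIm ..
qed

end
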